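(* Let $G$ be a connected graph that has a cut vertex. Then a minimum connecting transition set of $G$ has size exactly $|V(G)|-2$; equivalently, $\{V(G)\}$ is a connecting hypergraph of $G$ of minimum cost.
   Context: All graphs are finite, simple and undirected. A cut vertex of a connected graph $G$ is a vertex $p$ such that $G-p$ is disconnected. $G[X]$ denotes the subgraph induced by $X\subseteq V(G)$. A transition of a graph $G$ is an unordered pair $\{ab,bc\}$ of two distinct edges of $G$ sharing the vertex $b$ (so $a\neq c$); it is written $abc$. A walk in $G$ is a sequence $(v_1,\dots,v_k)$ of vertices with $v_iv_{i+1}\in E(G)$ for all $i\le k-1$; it leads from $v_1$ to $v_k$. For a set $T$ of transitions of $G$, a walk $(v_1,\dots,v_k)$ is $T$-compatible if for every $i\in[1,k-2]$, either $v_i=v_{i+2}$ or $v_iv_{i+1}v_{i+2}\in T$. The graph $G$ is $T$-connected, and $T$ is a connecting transition set of $G$, if for all vertices $u,v$ of $G$ there is a $T$-compatible walk leading from $u$ to $v$. A connecting hypergraph of $G$ is a set $H$ of subsets of $V(G)$ such that every $E\in H$ satisfies $|E|\ge 2$ and $G[E]$ is connected, and for every pair of distinct non-adjacent vertices $u,v$ of $G$ there exists $E\in H$ with $u,v\in E$. Its cost is $\mathrm{cost}(H)=\sum_{E\in H}(|E|-2)$. *)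

theory Defs
  imports Main
begin

definition simple_graph :: "'a set \<Rightarrow> 'a set set \<Rightarrow> bool" where
  "simple_graph V E \<longleftrightarrow> finite V \<and> (\<forall>e\<in>E. \<exists>u v. e = {u, v} \<and> u \<noteq> v \<and> u \<in> V \<and> v \<in> V)"

definition is_walk :: "'a set set \<Rightarrow> 'a list \<Rightarrow> bool" where
  "is_walk E xs \<longleftrightarrow> xs \<noteq> [] \<and> (\<forall>i. Suc i < length xs \<longrightarrow> {xs ! i, xs ! Suc i} \<in> E)"

definition graph_connected :: "'a set \<Rightarrow> 'a set set \<Rightarrow> bool" where
  "graph_connected V E \<longleftrightarrow> V \<noteq> {} \<and>
     (\<forall>u\<in>V. \<forall>v\<in>V. \<exists>xs. is_walk E xs \<and> set xs \<subseteq> V \<and> hd xs = u \<and> last xs = v)"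

definition induced_edges :: "'a set set \<Rightarrow> 'a set \<Rightarrow> 'a set set" where
  "induced_edges E X = {e \<in> E. e \<subseteq> X}"

definition cut_vertex :: "'a set \<Rightarrow> 'a set set \<Rightarrow> 'a \<Rightarrow> bool" where
  "cut_vertex V E p \<longleftrightarrow> p \<in> V \<and>
     (\<exists>u\<in>V - {p}. \<exists>v\<in>V - {p}. \<not> (\<exists>xs. is_walk (induced_edges E (V - {p})) xs
         \<and> set xs \<subseteq> V - {p} \<and> hd xs = u \<and> last xs = v))"

definition transition :: "'a \<Rightarrow> 'a \<Rightarrow> 'a \<Rightarrow> 'a set set" where
  "transition a b c = {{a, b}, {b, c}}"

definition transitions :: "'a set set \<Rightarrow> 'a set set set" where
  "transitions E = {transition a b c | a b c. {a, b} \<in> E \<and> {b, c} \<in> E \<and> a \<noteq> c}"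

definition T_compatible :: "'a set set set \<Rightarrow> 'a list \<Rightarrow> bool" where
  "T_compatible T xs \<longleftrightarrow> (\<forall>i. i + 2 < length xs \<longrightarrow>
      xs ! i = xs ! (i + 2) \<or> transition (xs ! i) (xs ! (i + 1)) (xs ! (i + 2)) \<in> T)"

definition connecting_transition_set :: "'a set \<Rightarrow> 'a set set \<Rightarrow> 'a set set set \<Rightarrow> bool" where
  "connecting_transition_set V E T \<longleftrightarrow> T \<subseteq> transitions E \<and>
     (\<forall>u\<in>V. \<forall>v\<in>V. \<exists>xs. is_walk E xs \<and> T_compatible T xs \<and> hd xs = u \<and> last xs = v)"

definition connecting_hypergraph :: "'a set \<Rightarrow> 'a set set \<Rightarrow> 'a set set \<Rightarrow> bool" where
  "connecting_hypergraph V E H \<longleftrightarrow>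
     (\<forall>X\<in>H. X \<subseteq> V \<and> 2 \<le> card X \<and> graph_connected X (induced_edges E X)) \<and>
     (\<forall>u\<in>V. \<forall>v\<in>V. u \<noteq> v \<and> {u, v} \<notin> E \<longrightarrow> (\<exists>X\<in>H. u \<in> X \<and> v \<in> X))"

definition hcost :: "'a set set \<Rightarrow> nat" where
  "hcost H = (\<Sum>X\<in>H. card X - 2)"

end

theory Submission
  imports Defs
begin


lemma is_walk_Cons:
  assumes "xs \<noteq> []"
  shows "is_walk E (a # xs) \<longleftrightarrow> {a, hd xs} \<in> E \<and> is_walk E xs"
proof
  assume h: "is_walk E (a # xs)"
  then have "{(a#xs) ! 0, (a#xs) ! Suc 0} \<in> E" using assms unfolding is_walk_def by auto
  then have 1: "{a, hd xs} \<in> E" using assms by (simp add: hd_conv_nth)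
  have "\<forall>i. Suc i < length xs \<longrightarrow> {xs ! i, xs ! Suc i} \<in> E"
  proof (intro allI impI)
    fix i assume "Suc i < length xs"
    then have "{(a#xs) ! Suc i, (a#xs) ! Suc (Suc i)} \<in> E" using h unfolding is_walk_def by auto
    then show "{xs ! i, xs ! Suc i} \<in> E" by simp
  qed
  with 1 assms show "{a, hd xs} \<in> E \<and> is_walk E xs" unfolding is_walk_def by auto
next
  assume h: "{a, hd xs} \<in> E \<and> is_walk E xs"
  show "is_walk E (a # xs)" unfolding is_walk_def
  proof (intro conjI allI impI)
    fix i assume i: "Suc i < length (a # xs)"
    show "{(a # xs) ! i, (a # xs) ! Suc i} \<in> E"
    proof (cases i)
      case 0 then show ?thesis using h assms by (simp add: hd_conv_nth)
    next
      case (Suc j) then show ?thesis using h i unfolding is_walk_def by auto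
    qed
  qed simp
qed

lemma is_walk_snoc:
  assumes "is_walk E xs" "{last xs, z} \<in> E"
  shows "is_walk E (xs @ [z])"
  unfolding is_walk_def
proof (intro conjI allI impI)
  fix i assume i: "Suc i < length (xs @ [z])"
  have ne: "xs \<noteq> []" using assms unfolding is_walk_def by auto
  show "{(xs @ [z]) ! i, (xs @ [z]) ! Suc i} \<in> E"
  proof (cases "Suc i < length xs")
    case True then show ?thesis using assms(1) unfolding is_walk_def by (simp add: nth_append)
  next
    case False
    then have "i = length xs - 1" using i by simp
    then show ?thesis using assms(2) ne by (simp add: nth_append last_conv_nth)
  qed
qed simp

lemma tc_Cons3:
  "T_compatible T (a # b # c # r) \<longleftrightarrow> (a = c \<or> transition a b c \<in> T) \<and> T_compatible T (b # c # r)"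
proof
  assume h: "T_compatible T (a # b # c # r)"
  have 1: "a = c \<or> transition a b c \<in> T" using h[unfolded T_compatible_def, rule_format, of 0] by simp
  have "T_compatible T (b # c # r)" unfolding T_compatible_def
  proof (intro allI impI)
    fix i assume "i + 2 < length (b # c # r)"
    then show "(b # c # r) ! i = (b # c # r) ! (i + 2) \<or>
         transition ((b # c # r) ! i) ((b # c # r) ! (i + 1)) ((b # c # r) ! (i + 2)) \<in> T"
      using h[unfolded T_compatible_def, rule_format, of "Suc i"] by simp
  qed
  with 1 show "(a = c \<or> transition a b c \<in> T) \<and> T_compatible T (b # c # r)" by simp
next
  assume h: "(a = c \<or> transition a b c \<in> T) \<and> T_compatible T (b # c # r)"
  show "T_compatible T (a # b # c # r)" unfolding T_compatible_def
  proof (intro allI impI)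
    fix i assume i: "i + 2 < length (a # b # c # r)"
    show "(a # b # c # r) ! i = (a # b # c # r) ! (i + 2) \<or>
         transition ((a # b # c # r) ! i) ((a # b # c # r) ! (i + 1)) ((a # b # c # r) ! (i + 2)) \<in> T"
    proof (cases i)
      case 0 then show ?thesis using h by simp
    next
      case (Suc j) then show ?thesis using h i unfolding T_compatible_def
        by (auto simp del: nth_Cons_Suc simp add: nth_Cons_Suc[symmetric] elim!: allE[of _ j])
    qed
  qed
qed

lemma tc_short: "length xs \<le> 2 \<Longrightarrow> T_compatible T xs"
  by (simp add: T_compatible_def)

lemma tc_snoc:
  assumes "T_compatible T (zs @ [c, d])" "c = z \<or> transition c d z \<in> T"
  shows "T_compatible T (zs @ [c, d, z])"
  unfolding T_compatible_def
proof (intro allI impI)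
  fix i assume i: "i + 2 < length (zs @ [c, d, z])"
  have eq: "zs @ [c, d, z] = (zs @ [c, d]) @ [z]" by simp
  show "(zs @ [c, d, z]) ! i = (zs @ [c, d, z]) ! (i + 2) \<or>
         transition ((zs @ [c, d, z]) ! i) ((zs @ [c, d, z]) ! (i + 1)) ((zs @ [c, d, z]) ! (i + 2)) \<in> T"
  proof (cases "i + 2 < length (zs @ [c, d])")
    case True
    have k: "\<And>j. j < length (zs @ [c, d]) \<Longrightarrow> (zs @ [c, d, z]) ! j = (zs @ [c, d]) ! j"
      unfolding eq by (simp add: nth_append del: append_Cons append_Nil append_assoc)
    have "i < length (zs @ [c, d])" "i + 1 < length (zs @ [c, d])" using True by auto
    then show ?thesis using assms(1)[unfolded T_compatible_def, rule_format, of i] True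
      by (simp only: k)
  next
    case False
    then have "i = length zs" using i by simp
    then show ?thesis using assms(2) by (simp add: nth_append)
  qed
qed

lemma transition_sym: "transition a b c = transition c b a"
  unfolding transition_def by (simp add: insert_commute)



definition ewalk :: "'a set set \<Rightarrow> 'a set set set \<Rightarrow> 'a \<Rightarrow> 'a \<Rightarrow> 'a \<Rightarrow> 'a \<Rightarrow> bool" where
  "ewalk E T a b c d \<longleftrightarrow> (\<exists>ys zs. is_walk E (a # b # ys) \<and> T_compatible T (a # b # ys) \<and> a # b # ys = zs @ [c, d])"

lemma ewalk_edge: "{a, b} \<in> E \<Longrightarrow> ewalk E T a b a b"
  unfolding ewalk_def
  by (rule exI[of _ "[]"], rule exI[of _ "[]"]) (simp add: is_walk_def tc_short less_Suc_eq)

lemma ewalk_prepend: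
  assumes "ewalk E T a b c d" "{w, a} \<in> E" "w = b \<or> transition w a b \<in> T"
  shows "ewalk E T w a c d"
proof -
  obtain ys zs where h: "is_walk E (a # b # ys)" "T_compatible T (a # b # ys)" "a # b # ys = zs @ [c, d]"
    using assms(1) unfolding ewalk_def by blast
  have "is_walk E (w # a # b # ys)" using h(1) assms(2) by (subst is_walk_Cons) auto
  moreover have "T_compatible T (w # a # b # ys)" using h(2) assms(3) by (simp add: tc_Cons3)
  moreover have "w # a # b # ys = (w # zs) @ [c, d]" using h(3) by simp
  ultimately show ?thesis unfolding ewalk_def by blast
qed

lemma ewalk_append:
  assumes "ewalk E T a b c d" "{d, z} \<in> E" "c = z \<or> transition c d z \<in> T"
  shows "ewalk E T a b d z"
proof -
  obtain ys zs where h: "is_walk E (a # b # ys)" "T_compatible T (a # b # ys)" "a # b # ys = zs @ [c, d]"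
    using assms(1) unfolding ewalk_def by blast
  have l: "last (a # b # ys) = d"
  proof -
    have "last (zs @ [c, d]) = d" by simp
    then show ?thesis using h(3) by simp
  qed
  have 1: "is_walk E ((a # b # ys) @ [z])" using h(1) assms(2) l by (intro is_walk_snoc) auto
  have "T_compatible T (zs @ [c, d])" using h(2) h(3) by simp
  then have 2: "T_compatible T (zs @ [c, d, z])" by (rule tc_snoc[OF _ assms(3)])
  have 3: "(a # b # ys) @ [z] = zs @ [c, d, z]" using h(3) by simp
  show ?thesis unfolding ewalk_def
    apply (rule exI[of _ "ys @ [z]"], rule exI[of _ "zs @ [c]"])
    using 1 2 3 by (simp only: append_Cons) simp
qed

lemma ewalk_back: "{a, b} \<in> E \<Longrightarrow> ewalk E T a b b a"
  by (rule ewalk_append[OF ewalk_edge]) (auto simp: insert_commute)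

lemma tc_mono: "T_compatible T xs \<Longrightarrow> T \<subseteq> T' \<Longrightarrow> T_compatible T' xs"
  unfolding T_compatible_def by auto

lemma ewalk_mono: "ewalk E T a b c d \<Longrightarrow> T \<subseteq> T' \<Longrightarrow> ewalk E T' a b c d"
  unfolding ewalk_def using tc_mono by metis

lemma ewalk_connects:
  assumes "ewalk E T a b c d"
  shows "\<exists>xs. is_walk E xs \<and> T_compatible T xs \<and> hd xs = a \<and> last xs = d"
proof -
  obtain ys zs where h: "is_walk E (a # b # ys)" "T_compatible T (a # b # ys)" "a # b # ys = zs @ [c, d]"
    using assms(1) unfolding ewalk_def by blast
  have "last (zs @ [c, d]) = d" by simp
  then have "last (a # b # ys) = d" using h(3) by simp
  then show ?thesis using h(1,2) by (intro exI[of _ "a # b # ys"]) simp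
qed

definition inv :: "'a set \<Rightarrow> 'a set set \<Rightarrow> 'a set \<Rightarrow> 'a set set \<Rightarrow> 'a set set set \<Rightarrow> bool" where
  "inv V E U S T \<longleftrightarrow> U \<subseteq> V \<and> S \<subseteq> E \<and> (\<forall>e\<in>S. e \<subseteq> U) \<and> T \<subseteq> transitions E \<and> finite T
    \<and> card T + 2 \<le> card U \<and> (\<forall>x\<in>U. \<exists>e\<in>S. x \<in> e)
    \<and> (\<forall>a b c d. {a, b} \<in> S \<longrightarrow> {c, d} \<in> S \<longrightarrow> ewalk E T a b c d)"

lemma edge_other:
  assumes "simple_graph V E" "e \<in> E" "x \<in> e"
  shows "\<exists>y. e = {x, y} \<and> x \<noteq> y \<and> y \<in> V"
proof -
  obtain u v where uv: "e = {u, v}" "u \<noteq> v" "u \<in> V" "v \<in> V" using assms(1,2) unfolding simple_graph_def by blast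
  show ?thesis
  proof (cases "x = u")
    case True then show ?thesis using uv by blast
  next
    case False then have "x = v" using uv assms(3) by blast
    then show ?thesis using uv by (auto simp: insert_commute)
  qed
qed

lemma invD:
  assumes "inv V E U S T"
  shows "U \<subseteq> V" "S \<subseteq> E" "\<And>e. e \<in> S \<Longrightarrow> e \<subseteq> U" "T \<subseteq> transitions E" "finite T"
    "card T + 2 \<le> card U" "\<And>x. x \<in> U \<Longrightarrow> \<exists>e\<in>S. x \<in> e"
    "\<And>a b c d. {a, b} \<in> S \<Longrightarrow> {c, d} \<in> S \<Longrightarrow> ewalk E T a b c d"
  using assms unfolding inv_def by auto

lemma ins_dbl_cases:
  assumes "{a, b} \<in> insert {x, w} S"
  obtains "{a, b} \<in> S" | "a = x" "b = w" | "a = w" "b = x"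
  using assms by (metis doubleton_eq_iff insertE)

lemma doubleton_cases: "{a, b} = {x, w} \<Longrightarrow> (a = x \<and> b = w) \<or> (a = w \<and> b = x)"
  by (metis doubleton_eq_iff)

lemma transitionI: "{a, b} \<in> E \<Longrightarrow> {b, c} \<in> E \<Longrightarrow> a \<noteq> c \<Longrightarrow> transition a b c \<in> transitions E"
  unfolding transitions_def by (rule CollectI, rule exI[of _ a], rule exI[of _ b], rule exI[of _ c]) simp

lemma inv_step:
  assumes G: "simple_graph V E" and I: "inv V E U S T" and xw: "{x, w} \<in> E" "x \<in> U" "w \<in> V - U"
  shows "\<exists>S' T'. inv V E (insert w U) S' T'"
proof -
  obtain e where e: "e \<in> S" "x \<in> e" using invD(7)[OF I] xw by blast
  have eE: "e \<in> E" using e invD(2)[OF I] by blast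
  obtain y where y: "e = {x, y}" "x \<noteq> y" using edge_other[OF G eE e(2)] by blast
  have yU: "y \<in> U" using e y invD(3)[OF I] by blast
  have yw: "y \<noteq> w" using yU xw by blast
  define t where "t = transition w x y"
  define T' where "T' = insert t T"
  define S' where "S' = insert {x, w} S"
  have xyE: "{x, y} \<in> E" using eE y by simp
  have wx: "{w, x} \<in> E" using xw by (simp add: insert_commute)
  have tT: "t \<in> transitions E" unfolding t_def using yw by (intro transitionI[OF wx xyE]) auto
  have old: "\<And>a b c d. {a, b} \<in> S \<Longrightarrow> {c, d} \<in> S \<Longrightarrow> ewalk E T' a b c d"
  proof -
    fix a b c d assume "{a, b} \<in> S" "{c, d} \<in> S"
    then have "ewalk E T a b c d" by (rule invD(8)[OF I])
    then show "ewalk E T' a b c d" by (rule ewalk_mono) (auto simp: T'_def)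
  qed
  have xyS: "{x, y} \<in> S" "{y, x} \<in> S" using e y by (auto simp: insert_commute)
  have tin: "transition w x y \<in> T'" "transition y x w \<in> T'"
    unfolding T'_def t_def by (auto simp: transition_sym)
  have from_old_new: "\<And>a b. {a, b} \<in> S \<Longrightarrow> ewalk E T' a b x w"
  proof -
    fix a b assume ab: "{a, b} \<in> S"
    have "ewalk E T' a b y x" by (rule old[OF ab xyS(2)])
    then show "ewalk E T' a b x w" by (rule ewalk_append) (use xw(1) tin(2) in auto)
  qed
  have to_xw: "\<And>a b. {a, b} \<in> S' \<Longrightarrow> ewalk E T' a b x w"
  proof -
    fix a b assume "{a, b} \<in> S'"
    then consider "{a, b} \<in> S" | "a = x" "b = w" | "a = w" "b = x" unfolding S'_def by (rule ins_dbl_cases)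
    then show "ewalk E T' a b x w"
    proof cases
      case 1 then show ?thesis by (rule from_old_new)
    next
      case 2 then show ?thesis using ewalk_edge[OF xw(1)] by simp
    next
      case 3 then show ?thesis using ewalk_back[OF wx] by simp
    qed
  qed
  have to_wx: "\<And>a b. {a, b} \<in> S' \<Longrightarrow> ewalk E T' a b w x"
  proof -
    fix a b assume ab: "{a, b} \<in> S'"
    show "ewalk E T' a b w x" by (rule ewalk_append[OF to_xw[OF ab] wx]) simp
  qed
  have to_old: "\<And>a b c d. {a, b} \<in> S' \<Longrightarrow> {c, d} \<in> S \<Longrightarrow> ewalk E T' a b c d"
  proof -
    fix a b c d assume ab: "{a, b} \<in> S'" and cd: "{c, d} \<in> S"
    have 1: "ewalk E T' x y c d" using old[OF xyS(1) cd] .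
    have 2: "ewalk E T' w x c d" using tin(1) by (intro ewalk_prepend[OF 1 wx]) auto
    have 3: "ewalk E T' x w c d" by (rule ewalk_prepend[OF 2 xw(1)]) simp
    from ab consider "{a, b} \<in> S" | "a = x" "b = w" | "a = w" "b = x" unfolding S'_def by (rule ins_dbl_cases)
    then show "ewalk E T' a b c d"
    proof cases
      case 1 then show ?thesis by (rule old[OF _ cd])
    next
      case 2 then show ?thesis using 3 by simp
    next
      case 3 then show ?thesis using 2 by simp
    qed
  qed
  have walks: "\<forall>a b c d. {a, b} \<in> S' \<longrightarrow> {c, d} \<in> S' \<longrightarrow> ewalk E T' a b c d"
  proof (intro allI impI)
    fix a b c d assume ab: "{a, b} \<in> S'" and cd: "{c, d} \<in> S'"
    from cd consider "{c, d} \<in> S" | "c = x" "d = w" | "c = w" "d = x" unfolding S'_def by (rule ins_dbl_cases)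
    then show "ewalk E T' a b c d"
    proof cases
      case 1 then show ?thesis by (rule to_old[OF ab])
    next
      case 2 then show ?thesis using to_xw[OF ab] by simp
    next
      case 3 then show ?thesis using to_wx[OF ab] by simp
    qed
  qed
  have finV: "finite V" using G unfolding simple_graph_def by blast
  have finU: "finite U" using invD(1)[OF I] finV by (meson finite_subset)
  have "card T' \<le> card T + 1" unfolding T'_def using invD(5)[OF I] by (simp add: card_insert_if)
  moreover have "card (insert w U) = card U + 1" using finU xw by simp
  ultimately have c: "card T' + 2 \<le> card (insert w U)" using invD(6)[OF I] by linarith
  have "inv V E (insert w U) S' T'"
    unfolding inv_def
  proof (intro conjI)
    show "insert w U \<subseteq> V" using invD(1)[OF I] xw by blast
    show "S' \<subseteq> E" using invD(2)[OF I] xw unfolding S'_def by blast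
    show "\<forall>e\<in>S'. e \<subseteq> insert w U" using invD(3)[OF I] xw unfolding S'_def by blast
    show "T' \<subseteq> transitions E" using invD(4)[OF I] tT unfolding T'_def by blast
    show "finite T'" using invD(5)[OF I] unfolding T'_def by blast
    show "card T' + 2 \<le> card (insert w U)" by (rule c)
    show "\<forall>x\<in>insert w U. \<exists>e\<in>S'. x \<in> e" using invD(7)[OF I] unfolding S'_def by blast
  qed (rule walks)
  then show ?thesis by blast
qed



lemma grow_edge:
  assumes C: "graph_connected V E" and U: "U \<subseteq> V" "u \<in> U" "v \<in> V" "v \<notin> U"
  shows "\<exists>x w. {x, w} \<in> E \<and> x \<in> U \<and> w \<in> V - U"
proof (rule ccontr)
  assume na: "\<not> (\<exists>x w. {x, w} \<in> E \<and> x \<in> U \<and> w \<in> V - U)"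
  obtain xs where xs: "is_walk E xs" "set xs \<subseteq> V" "hd xs = u" "last xs = v"
    using C U unfolding graph_connected_def by blast
  have ne: "xs \<noteq> []" using xs(1) unfolding is_walk_def by simp
  have all: "\<forall>i. i < length xs \<longrightarrow> xs ! i \<in> U"
  proof (intro allI)
    fix i show "i < length xs \<longrightarrow> xs ! i \<in> U"
    proof (induction i)
      case 0 then show ?case using xs(3) U(2) ne by (simp add: hd_conv_nth)
    next
      case (Suc i)
      show ?case
      proof
        assume si: "Suc i < length xs"
        then have xi: "xs ! i \<in> U" using Suc by simp
        have e: "{xs ! i, xs ! Suc i} \<in> E" using xs(1) si unfolding is_walk_def by blast
        have "xs ! Suc i \<in> V" using xs(2) si by (meson nth_mem subsetD)
        then show "xs ! Suc i \<in> U" using na e xi by blast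
      qed
    qed
  qed
  have "last xs = xs ! (length xs - 1)" using ne by (simp add: last_conv_nth)
  then have "v \<in> U" using all ne xs(4) by simp
  then show False using U by blast
qed

lemma inv_full:
  assumes G: "simple_graph V E" and C: "graph_connected V E"
  shows "inv V E U S T \<Longrightarrow> card V - card U = n \<Longrightarrow> \<exists>S' T'. inv V E V S' T'"
proof (induction n arbitrary: U S T)
  case 0
  have finV: "finite V" using G unfolding simple_graph_def by blast
  have "U \<subseteq> V" using invD(1)[OF "0.prems"(1)] .
  moreover have "card V \<le> card U" using "0.prems"(2) by simp
  ultimately have "U = V" using finV by (meson card_seteq)
  then show ?case using "0.prems"(1) by blast
next
  case (Suc n)
  have finV: "finite V" using G unfolding simple_graph_def by blast
  have UV: "U \<subseteq> V" using invD(1)[OF Suc.prems(1)] .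
  have c2: "2 \<le> card U" using invD(6)[OF Suc.prems(1)] by simp
  then obtain u where u: "u \<in> U" by fastforce
  have "U \<noteq> V" using Suc.prems(2) by auto
  then obtain v where v: "v \<in> V" "v \<notin> U" using UV by blast
  obtain x w where xw: "{x, w} \<in> E" "x \<in> U" "w \<in> V - U" using grow_edge[OF C UV u v] by blast
  obtain S' T' where I: "inv V E (insert w U) S' T'" using inv_step[OF G Suc.prems(1) xw] by blast
  have finU: "finite U" using UV finV by (meson finite_subset)
  have "card (insert w U) = card U + 1" using finU xw by simp
  then have "card V - card (insert w U) = n" using Suc.prems(2) by simp
  then show ?case using Suc.IH[OF I] by blast
qed

lemma inv_base:
  assumes G: "simple_graph V E" and C: "graph_connected V E" and c: "2 \<le> card V"
  shows "\<exists>U S T. inv V E U S T"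
proof -
  have finV: "finite V" using G unfolding simple_graph_def by blast
  obtain u where u: "u \<in> V" using c by fastforce
  have "V \<noteq> {u}" using c by auto
  then obtain v where v: "v \<in> V" "v \<notin> {u}" using u by blast
  obtain x w where xw: "{x, w} \<in> E" "x \<in> {u}" "w \<in> V - {u}" using grow_edge[OF C _ _ v] u by blast
  have xu: "x = u" using xw by simp
  have wx: "{w, x} \<in> E" using xw(1) by (simp add: insert_commute)
  have ne: "x \<noteq> w" using xw by auto
  have walks: "\<forall>a b c d. {a, b} \<in> {{x, w}} \<longrightarrow> {c, d} \<in> {{x, w}} \<longrightarrow> ewalk E {} a b c d"
  proof (intro allI impI)
    fix a b c d assume ab: "{a, b} \<in> {{x, w}}" and cd: "{c, d} \<in> {{x, w}}"
    from ab have ab': "{a, b} \<in> insert {x, w} {}" by simp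
    from cd have cd': "{c, d} \<in> insert {x, w} {}" by simp
    from ab' show "ewalk E {} a b c d"
    proof (cases rule: ins_dbl_cases)
      case 1 then show ?thesis by simp
    next
      case 2
      from cd' show ?thesis
        by (cases rule: ins_dbl_cases) (use 2 ewalk_edge[OF xw(1)] ewalk_back[OF xw(1)] in simp_all)
    next
      case 3
      from cd' show ?thesis
        by (cases rule: ins_dbl_cases) (use 3 ewalk_edge[OF wx] ewalk_back[OF wx] in simp_all)
    qed
  qed
  have "inv V E {x, w} {{x, w}} {}"
    unfolding inv_def
  proof (intro conjI)
    show "{x, w} \<subseteq> V" using xw u by blast
    show "{{x, w}} \<subseteq> E" using xw by blast
    show "card {} + 2 \<le> card {x, w}" using ne by simp
  qed (use walks in auto)
  then show ?thesis by blast
qed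

lemma inv_connecting:
  assumes G: "simple_graph V E" and I: "inv V E V S T"
  shows "connecting_transition_set V E T \<and> card T + 2 \<le> card V"
proof -
  have "\<forall>u\<in>V. \<forall>v\<in>V. \<exists>xs. is_walk E xs \<and> T_compatible T xs \<and> hd xs = u \<and> last xs = v"
  proof (intro ballI)
    fix u v assume u: "u \<in> V" and v: "v \<in> V"
    obtain e where e: "e \<in> S" "u \<in> e" using invD(7)[OF I u] by blast
    obtain f where f: "f \<in> S" "v \<in> f" using invD(7)[OF I v] by blast
    have eE: "e \<in> E" "f \<in> E" using e f invD(2)[OF I] by auto
    obtain u' where u': "e = {u, u'}" using edge_other[OF G eE(1) e(2)] by blast
    obtain v' where v': "f = {v', v}" using edge_other[OF G eE(2) f(2)] by (auto simp: insert_commute)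
    have "ewalk E T u u' v' v" using invD(8)[OF I] e(1) f(1) u' v' by simp
    then show "\<exists>xs. is_walk E xs \<and> T_compatible T xs \<and> hd xs = u \<and> last xs = v"
      by (rule ewalk_connects)
  qed
  then show ?thesis using invD(4,6)[OF I] unfolding connecting_transition_set_def by simp
qed

lemma upper_bound:
  assumes G: "simple_graph V E" and C: "graph_connected V E" and c: "2 \<le> card V"
  shows "\<exists>T. connecting_transition_set V E T \<and> card T + 2 \<le> card V"
proof -
  obtain U S T where I: "inv V E U S T" using inv_base[OF G C c] by blast
  obtain S' T' where "inv V E V S' T'" using inv_full[OF G C I refl] by blast
  then show ?thesis using inv_connecting[OF G] by blast
qed



lemma tree_bound:
  assumes fin: "finite W" and RW: "R \<subseteq> W \<times> W" and r: "r \<in> W" and conn: "\<forall>w\<in>W. (r, w) \<in> R\<^sup>*"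
  shows "card W \<le> card ((\<lambda>(x, y). {x, y}) ` R) + 1"
proof -
  define d where "d w = (LEAST n. (r, w) \<in> R ^^ n)" for w
  have dI: "(r, w) \<in> R ^^ d w" if "w \<in> W" for w
  proof -
    have "\<exists>n. (r, w) \<in> R ^^ n" using conn that rtrancl_power by blast
    then show ?thesis unfolding d_def by (rule LeastI_ex)
  qed
  have dle: "d w \<le> n" if "(r, w) \<in> R ^^ n" for w n
    unfolding d_def using that by (rule Least_le)
  have par: "\<exists>y. (y, w) \<in> R \<and> d y < d w" if w: "w \<in> W - {r}" for w
  proof -
    have rw: "(r, w) \<in> R ^^ d w" using dI w by blast
    have "d w \<noteq> 0"
    proof
      assume "d w = 0"
      then have "(r, w) \<in> R ^^ 0" using rw by simp
      then show False using w by simp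
    qed
    then obtain m where m: "d w = Suc m" by (cases "d w") auto
    then have "(r, w) \<in> R ^^ m O R" using rw by simp
    then obtain y where y: "(r, y) \<in> R ^^ m" "(y, w) \<in> R" by blast
    have "d y \<le> m" using dle[OF y(1)] .
    then show ?thesis using y(2) m by auto
  qed
  have ex: "\<forall>w\<in>W - {r}. \<exists>y. (y, w) \<in> R \<and> d y < d w" using par by blast
  then have "\<exists>pa. \<forall>w\<in>W - {r}. (pa w, w) \<in> R \<and> d (pa w) < d w" by (rule bchoice)
  then obtain pa where pa: "\<forall>w\<in>W - {r}. (pa w, w) \<in> R \<and> d (pa w) < d w" by (elim exE)
  define g where "g w = {pa w, w}" for w
  have inj: "inj_on g (W - {r})"
  proof (rule inj_onI)
    fix w1 w2 assume w1: "w1 \<in> W - {r}" and w2: "w2 \<in> W - {r}" and eq: "g w1 = g w2"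
    show "w1 = w2"
    proof (rule ccontr)
      assume ne: "w1 \<noteq> w2"
      have "w1 \<in> g w2" using eq unfolding g_def by auto
      then have 1: "w1 = pa w2" using ne unfolding g_def by auto
      have "w2 \<in> g w1" using eq unfolding g_def by auto
      then have 2: "w2 = pa w1" using ne unfolding g_def by auto
      have i1: "d (pa w2) < d w2" using pa w2 by blast
      have i2: "d (pa w1) < d w1" using pa w1 by blast
      have a: "d w1 < d w2" using i1 unfolding 1[symmetric] .
      have b: "d w2 < d w1" using i2 unfolding 2[symmetric] .
      show False using a b by linarith
    qed
  qed
  have sub: "g ` (W - {r}) \<subseteq> (\<lambda>(x, y). {x, y}) ` R"
  proof
    fix s assume "s \<in> g ` (W - {r})"
    then obtain w where w: "w \<in> W - {r}" "s = g w" by blast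
    have "(pa w, w) \<in> R" using pa w(1) by blast
    then show "s \<in> (\<lambda>(x, y). {x, y}) ` R" unfolding w(2) g_def by force
  qed
  have finR: "finite R" using RW fin by (meson finite_SigmaI finite_subset)
  have "card (W - {r}) \<le> card ((\<lambda>(x, y). {x, y}) ` R)"
    using card_inj_on_le[OF inj sub] finR by simp
  moreover have "card W = card (W - {r}) + 1" using fin r
    by (metis Suc_eq_plus1 card_Suc_Diff1)
  ultimately show ?thesis by simp
qed

lemma per_bound:
  assumes fin: "finite X" and pA: "p \<notin> A" and pB: "p \<notin> B" and AB: "A \<inter> B = {}"
    and XV: "X \<subseteq> insert p (A \<union> B)" and c2: "2 \<le> card X"
    and sep: "p \<notin> X \<Longrightarrow> X \<inter> A = {} \<or> X \<inter> B = {}" and a0: "a0 \<in> A"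
  shows "card (if a0 \<in> X then X \<inter> B else {}) + card (if X \<inter> B \<noteq> {} then X \<inter> (A - {a0}) else {}) \<le> card X - 2"
proof (cases "p \<in> X")
  case True
  have dec: "X = insert p ((X \<inter> A) \<union> (X \<inter> B))" using XV True by blast
  have "card X = Suc (card ((X \<inter> A) \<union> (X \<inter> B)))"
    by (subst dec, rule card_insert_disjoint) (use fin pA pB in auto)
  moreover have "card ((X \<inter> A) \<union> (X \<inter> B)) = card (X \<inter> A) + card (X \<inter> B)"
    by (rule card_Un_disjoint) (use fin AB in auto)
  ultimately have cX: "card X = Suc (card (X \<inter> A) + card (X \<inter> B))" by simp
  have cA: "a0 \<in> X \<Longrightarrow> card (X \<inter> (A - {a0})) = card (X \<inter> A) - 1"
  proof -
    assume "a0 \<in> X"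
    then have "X \<inter> (A - {a0}) = (X \<inter> A) - {a0}" "a0 \<in> X \<inter> A" using a0 by auto
    then show ?thesis using fin by (simp add: card_Diff_singleton)
  qed
  have cA1: "a0 \<in> X \<Longrightarrow> card (X \<inter> A) \<ge> 1"
  proof -
    assume "a0 \<in> X"
    then have "X \<inter> A \<noteq> {}" using a0 by auto
    then show ?thesis using fin by (simp add: Suc_le_eq card_gt_0_iff)
  qed
  have cB1: "X \<inter> B \<noteq> {} \<Longrightarrow> card (X \<inter> B) \<ge> 1" using fin by (simp add: Suc_le_eq card_gt_0_iff)
  have cA2: "card (X \<inter> (A - {a0})) \<le> card (X \<inter> A)" using fin by (intro card_mono) auto
  show ?thesis
  proof (cases "a0 \<in> X")
    case True
    then show ?thesis using cX cA[OF True] cA1[OF True] c2 by auto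
  next
    case False
    show ?thesis
    proof (cases "X \<inter> B = {}")
      case True then show ?thesis using False by simp
    next
      case nB: False
      have "card (X \<inter> B) \<ge> 1" using cB1[OF nB] .
      then show ?thesis using False nB cX cA2 by simp
    qed
  qed
next
  case False
  then have "X \<inter> A = {} \<or> X \<inter> B = {}" by (rule sep)
  then show ?thesis
  proof
    assume h: "X \<inter> A = {}"
    then have "X \<inter> (A - {a0}) = {}" "a0 \<notin> X" using a0 by auto
    then show ?thesis by simp
  next
    assume "X \<inter> B = {}" then show ?thesis by simp
  qed
qed

lemma counting:
  fixes I :: "'i set" and X :: "'i \<Rightarrow> 'a set"
  assumes finI: "finite I" and finV: "finite V"
    and V: "V = insert p (A \<union> B)" and pA: "p \<notin> A" and pB: "p \<notin> B" and AB: "A \<inter> B = {}"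
    and a0: "a0 \<in> A" and Bne: "B \<noteq> {}"
    and XV: "\<And>i. i \<in> I \<Longrightarrow> X i \<subseteq> V \<and> 2 \<le> card (X i)"
    and sep: "\<And>i. i \<in> I \<Longrightarrow> p \<notin> X i \<Longrightarrow> X i \<inter> A = {} \<or> X i \<inter> B = {}"
    and cov: "\<And>a b. a \<in> A \<Longrightarrow> b \<in> B \<Longrightarrow> \<exists>i\<in>I. a \<in> X i \<and> b \<in> X i"
  shows "card A + card B - 1 \<le> (\<Sum>i\<in>I. card (X i) - 2)"
proof -
  define S1 where "S1 i = (if a0 \<in> X i then X i \<inter> B else {})" for i
  define S2 where "S2 i = (if X i \<inter> B \<noteq> {} then X i \<inter> (A - {a0}) else {})" for i
  have per: "card (S1 i) + card (S2 i) \<le> card (X i) - 2" if i: "i \<in> I" for i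
    unfolding S1_def S2_def
  proof (rule per_bound[OF _ pA pB AB _ _ _ a0])
    show "finite (X i)" using XV[OF i] finV by (meson finite_subset)
    show "X i \<subseteq> insert p (A \<union> B)" using XV[OF i] V by simp
    show "2 \<le> card (X i)" using XV[OF i] by simp
    show "p \<notin> X i \<Longrightarrow> X i \<inter> A = {} \<or> X i \<inter> B = {}" by (rule sep[OF i])
  qed
  have finA: "finite A" "finite B" using finV V by auto
  have B1: "B \<subseteq> (\<Union>i\<in>I. S1 i)"
  proof
    fix b assume b: "b \<in> B"
    obtain i where "i \<in> I" "a0 \<in> X i" "b \<in> X i" using cov[OF a0 b] by blast
    then show "b \<in> (\<Union>i\<in>I. S1 i)" using b unfolding S1_def by auto
  qed
  have A1: "A - {a0} \<subseteq> (\<Union>i\<in>I. S2 i)"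
  proof
    fix a assume a: "a \<in> A - {a0}"
    obtain b where b: "b \<in> B" using Bne by blast
    obtain i where "i \<in> I" "a \<in> X i" "b \<in> X i" using cov[OF _ b] a by blast
    then show "a \<in> (\<Union>i\<in>I. S2 i)" using a b unfolding S2_def by auto
  qed
  have finS: "finite (\<Union>i\<in>I. S1 i)" "finite (\<Union>i\<in>I. S2 i)"
    using finI finA unfolding S1_def S2_def by auto
  have "card B \<le> card (\<Union>i\<in>I. S1 i)" by (rule card_mono[OF finS(1) B1])
  also have "\<dots> \<le> (\<Sum>i\<in>I. card (S1 i))" by (rule card_UN_le[OF finI])
  finally have 1: "card B \<le> (\<Sum>i\<in>I. card (S1 i))" .
  have "card (A - {a0}) \<le> card (\<Union>i\<in>I. S2 i)" by (rule card_mono[OF finS(2) A1])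
  also have "\<dots> \<le> (\<Sum>i\<in>I. card (S2 i))" by (rule card_UN_le[OF finI])
  finally have 2: "card (A - {a0}) \<le> (\<Sum>i\<in>I. card (S2 i))" .
  have 3: "card (A - {a0}) = card A - 1" using a0 finA by simp
  have "(\<Sum>i\<in>I. card (S1 i)) + (\<Sum>i\<in>I. card (S2 i)) = (\<Sum>i\<in>I. card (S1 i) + card (S2 i))"
    by (simp add: sum.distrib)
  also have "\<dots> \<le> (\<Sum>i\<in>I. card (X i) - 2)" by (rule sum_mono) (rule per)
  finally have 4: "(\<Sum>i\<in>I. card (S1 i)) + (\<Sum>i\<in>I. card (S2 i)) \<le> (\<Sum>i\<in>I. card (X i) - 2)" .
  have "card A \<ge> 1" using a0 finA by (simp add: Suc_le_eq card_gt_0_iff) blast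
  then show ?thesis using 1 2 3 4 by linarith
qed



definition rp :: "'a set \<Rightarrow> 'a set set \<Rightarrow> 'a \<Rightarrow> ('a \<times> 'a) set" where
  "rp V E p = {(x, y). {x, y} \<in> E \<and> x \<in> V - {p} \<and> y \<in> V - {p}}"

lemma edge_sub: "simple_graph V E \<Longrightarrow> e \<in> E \<Longrightarrow> e \<subseteq> V"
proof -
  assume G: "simple_graph V E" and e: "e \<in> E"
  obtain u v where "e = {u, v}" "u \<in> V" "v \<in> V" using G e unfolding simple_graph_def by blast
  then show "e \<subseteq> V" by simp
qed

lemma rt_walk:
  assumes "(x, y) \<in> (rp V E p)\<^sup>*" "x \<in> V - {p}"
  shows "\<exists>xs. is_walk (induced_edges E (V - {p})) xs \<and> set xs \<subseteq> V - {p} \<and> hd xs = x \<and> last xs = y"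
  using assms(1)
proof (induction rule: rtrancl_induct)
  case base
  show ?case by (rule exI[of _ "[x]"]) (use assms(2) in \<open>auto simp: is_walk_def\<close>)
next
  case (step y z)
  obtain xs where xs: "is_walk (induced_edges E (V - {p})) xs" "set xs \<subseteq> V - {p}" "hd xs = x" "last xs = y"
    using step.IH by blast
  have ne: "xs \<noteq> []" using xs(1) unfolding is_walk_def by simp
  have yz: "{y, z} \<in> induced_edges E (V - {p})" "z \<in> V - {p}"
    using step(2) unfolding rp_def induced_edges_def by auto
  have "is_walk (induced_edges E (V - {p})) (xs @ [z])" by (rule is_walk_snoc) (use xs yz in simp_all)
  moreover have "set (xs @ [z]) \<subseteq> V - {p}" using xs(2) yz(2) by simp
  moreover have "hd (xs @ [z]) = x" using ne xs(3) by simp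
  moreover have "last (xs @ [z]) = z" by simp
  ultimately show ?case by blast
qed

lemma cut_split:
  assumes G: "simple_graph V E" and cv: "cut_vertex V E p"
  obtains A B where "V = insert p (A \<union> B)" "p \<notin> A" "p \<notin> B" "A \<inter> B = {}" "A \<noteq> {}" "B \<noteq> {}"
    "\<And>x y. {x, y} \<in> E \<Longrightarrow> x \<in> A \<Longrightarrow> y \<noteq> p \<Longrightarrow> y \<in> A"
proof -
  obtain u v where p: "p \<in> V" and u: "u \<in> V - {p}" and v: "v \<in> V - {p}"
    and nw: "\<not> (\<exists>xs. is_walk (induced_edges E (V - {p})) xs \<and> set xs \<subseteq> V - {p} \<and> hd xs = u \<and> last xs = v)"
    using cv unfolding cut_vertex_def by blast
  define A where "A = {w \<in> V - {p}. (u, w) \<in> (rp V E p)\<^sup>*}"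
  define B where "B = V - {p} - A"
  have uA: "u \<in> A" using u unfolding A_def by simp
  have vA: "v \<notin> A"
  proof
    assume "v \<in> A"
    then have "(u, v) \<in> (rp V E p)\<^sup>*" unfolding A_def by simp
    then show False using rt_walk[OF _ u] nw by blast
  qed
  have edge: "y \<in> A" if "{x, y} \<in> E" "x \<in> A" "y \<noteq> p" for x y
  proof -
    have "y \<in> V" using edge_sub[OF G that(1)] by simp
    then have "(x, y) \<in> rp V E p" using that unfolding rp_def A_def by auto
    moreover have "(u, x) \<in> (rp V E p)\<^sup>*" using that(2) unfolding A_def by simp
    ultimately have "(u, y) \<in> (rp V E p)\<^sup>*" by simp
    then show ?thesis using \<open>y \<in> V\<close> that(3) unfolding A_def by simp
  qed
  show ?thesis
  proof (rule that)
    show "V = insert p (A \<union> B)" using p unfolding A_def B_def by blast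
    show "p \<notin> A" unfolding A_def by simp
    show "p \<notin> B" unfolding B_def by simp
    show "A \<inter> B = {}" unfolding B_def by blast
    show "A \<noteq> {}" using uA by blast
    show "B \<noteq> {}" using v vA unfolding B_def by blast
  qed (rule edge)
qed

lemma walk_side:
  assumes edge: "\<And>x y. {x, y} \<in> E \<Longrightarrow> x \<in> A \<Longrightarrow> y \<noteq> p \<Longrightarrow> y \<in> A"
    and w: "is_walk E' xs" and sub: "E' \<subseteq> E" and pn: "p \<notin> set xs" and h: "hd xs \<in> A"
  shows "last xs \<in> A"
proof -
  have ne: "xs \<noteq> []" using w unfolding is_walk_def by simp
  have all: "i < length xs \<longrightarrow> xs ! i \<in> A" for i
  proof (induction i)
    case 0 then show ?case using h ne by (simp add: hd_conv_nth)
  next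
    case (Suc i)
    show ?case
    proof
      assume si: "Suc i < length xs"
      then have xi: "xs ! i \<in> A" using Suc by simp
      have "{xs ! i, xs ! Suc i} \<in> E'" using w si unfolding is_walk_def by blast
      then have e: "{xs ! i, xs ! Suc i} \<in> E" using sub by blast
      have "xs ! Suc i \<noteq> p" using pn si by (metis nth_mem)
      then show "xs ! Suc i \<in> A" using edge[OF e xi] by simp
    qed
  qed
  have "last xs = xs ! (length xs - 1)" using ne by (simp add: last_conv_nth)
  then show ?thesis using all[of "length xs - 1"] ne by simp
qed

lemma hyper_lower:
  assumes G: "simple_graph V E" and cv: "cut_vertex V E p" and H: "connecting_hypergraph V E H"
  shows "card V - 2 \<le> hcost H"
proof -
  obtain A B where V: "V = insert p (A \<union> B)" and pA: "p \<notin> A" and pB: "p \<notin> B" and AB: "A \<inter> B = {}"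
    and An: "A \<noteq> {}" and Bn: "B \<noteq> {}" and edge: "\<And>x y. {x, y} \<in> E \<Longrightarrow> x \<in> A \<Longrightarrow> y \<noteq> p \<Longrightarrow> y \<in> A"
    using cut_split[OF G cv] by blast
  obtain a0 where a0: "a0 \<in> A" using An by blast
  have finV: "finite V" using G unfolding simple_graph_def by blast
  have HV: "\<And>X. X \<in> H \<Longrightarrow> X \<subseteq> V \<and> 2 \<le> card X \<and> graph_connected X (induced_edges E X)"
    using H unfolding connecting_hypergraph_def by blast
  have finH: "finite H"
  proof (rule finite_subset)
    show "H \<subseteq> Pow V" using HV by blast
  qed (use finV in simp)
  have "card A + card B - 1 \<le> (\<Sum>X\<in>H. card ((\<lambda>X. X) X) - 2)"
  proof (rule counting[OF finH finV V pA pB AB a0 Bn])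
    fix X assume "X \<in> H" then show "(\<lambda>X. X) X \<subseteq> V \<and> 2 \<le> card ((\<lambda>X. X) X)" using HV by simp
  next
    fix X assume X: "X \<in> H" and pX: "p \<notin> (\<lambda>X. X) X"
    show "(\<lambda>X. X) X \<inter> A = {} \<or> (\<lambda>X. X) X \<inter> B = {}"
    proof (rule ccontr)
      assume "\<not> ((\<lambda>X. X) X \<inter> A = {} \<or> (\<lambda>X. X) X \<inter> B = {})"
      then obtain a b where ab: "a \<in> X" "a \<in> A" "b \<in> X" "b \<in> B" by auto
      obtain xs where xs: "is_walk (induced_edges E X) xs" "set xs \<subseteq> X" "hd xs = a" "last xs = b"
        using HV[OF X] ab unfolding graph_connected_def by blast
      have "last xs \<in> A"
        by (rule walk_side[OF edge xs(1)]) (use xs ab pX in \<open>auto simp: induced_edges_def\<close>)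
      then show False using xs(4) ab AB by blast
    qed
  next
    fix a b assume a: "a \<in> A" and b: "b \<in> B"
    have ne: "a \<noteq> b" using a b AB by blast
    have nE: "{a, b} \<notin> E" using edge[of a b] a b AB pB by blast
    have "a \<in> V" "b \<in> V" using a b V by auto
    then show "\<exists>X\<in>H. a \<in> (\<lambda>X. X) X \<and> b \<in> (\<lambda>X. X) X"
      using H ne nE unfolding connecting_hypergraph_def by simp
  qed
  moreover have "card V = card A + card B + 1"
  proof -
    have "finite (A \<union> B)" using finV V by simp
    then have "card V = Suc (card (A \<union> B))" using V pA pB by simp
    moreover have "card (A \<union> B) = card A + card B"
      by (rule card_Un_disjoint) (use finV V AB in auto)
    ultimately show ?thesis by simp
  qed
  ultimately show ?thesis unfolding hcost_def by simp
qed



lemma trans_dec: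
  assumes "t \<in> transitions E"
  obtains a b c where "t = {{a, b}, {b, c}}" "{a, b} \<in> E" "{b, c} \<in> E" "a \<noteq> c"
  using assms unfolding transitions_def transition_def by blast

lemma Q_step:
  assumes T: "T \<subseteq> transitions E" and ef: "{e, f} \<in> T"
  shows "e \<in> E \<and> f \<in> E \<and> (\<exists>b c. b \<in> e \<and> f = {b, c})"
proof -
  have "{e, f} \<in> transitions E" using T ef by blast
  then obtain a b c where t: "{e, f} = {{a, b}, {b, c}}" "{a, b} \<in> E" "{b, c} \<in> E" "a \<noteq> c"
    by (rule trans_dec)
  from t(1) have "(e = {a, b} \<and> f = {b, c}) \<or> (e = {b, c} \<and> f = {a, b})" by (simp add: doubleton_eq_iff)
  then show ?thesis
  proof
    assume h: "e = {a, b} \<and> f = {b, c}"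
    have "\<exists>b' c'. b' \<in> e \<and> f = {b', c'}" by (rule exI[of _ b], rule exI[of _ c]) (use h in simp)
    then show ?thesis using h t(2,3) by simp
  next
    assume h: "e = {b, c} \<and> f = {a, b}"
    then have fb: "f = {b, a}" by (simp add: insert_commute)
    have "\<exists>b' c'. b' \<in> e \<and> f = {b', c'}" by (rule exI[of _ b], rule exI[of _ a]) (use h fb in simp)
    then show ?thesis using h t(2,3) by simp
  qed
qed

lemma walk_chain:
  assumes w: "is_walk E xs" and tc: "T_compatible T xs" and Qd: "Q = {(e, f). {e, f} \<in> T}"
  shows "Suc i < length xs \<Longrightarrow> ({xs ! 0, xs ! 1}, {xs ! i, xs ! Suc i}) \<in> Q\<^sup>*"
proof (induction i)
  case 0 then show ?case by simp
next
  case (Suc i)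
  have IH: "({xs ! 0, xs ! 1}, {xs ! i, xs ! Suc i}) \<in> Q\<^sup>*" using Suc by simp
  have "i + 2 < length xs" using Suc.prems by simp
  then have "xs ! i = xs ! (i + 2) \<or> transition (xs ! i) (xs ! (i + 1)) (xs ! (i + 2)) \<in> T"
    using tc unfolding T_compatible_def by blast
  then show ?case
  proof
    assume "xs ! i = xs ! (i + 2)"
    then have "{xs ! Suc i, xs ! Suc (Suc i)} = {xs ! i, xs ! Suc i}"
      by (simp add: insert_commute)
    then show ?case using IH by simp
  next
    assume "transition (xs ! i) (xs ! (i + 1)) (xs ! (i + 2)) \<in> T"
    then have "({xs ! i, xs ! Suc i}, {xs ! Suc i, xs ! Suc (Suc i)}) \<in> Q"
      unfolding Qd transition_def by simp
    then show ?case by (rule rtrancl_into_rtrancl[OF IH])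
  qed
qed

lemma trans_lower:
  assumes G: "simple_graph V E" and cv: "cut_vertex V E p" and TT: "connecting_transition_set V E T"
  shows "card V - 2 \<le> card T"
proof -
  obtain A B where V: "V = insert p (A \<union> B)" and pA: "p \<notin> A" and pB: "p \<notin> B" and AB: "A \<inter> B = {}"
    and An: "A \<noteq> {}" and Bn: "B \<noteq> {}" and edge: "\<And>x y. {x, y} \<in> E \<Longrightarrow> x \<in> A \<Longrightarrow> y \<noteq> p \<Longrightarrow> y \<in> A"
    using cut_split[OF G cv] by blast
  obtain a0 where a0: "a0 \<in> A" using An by blast
  have finV: "finite V" using G unfolding simple_graph_def by blast
  have EV: "\<And>e. e \<in> E \<Longrightarrow> e \<subseteq> V" using edge_sub[OF G] .
  have finE: "finite E"
  proof (rule finite_subset)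
    show "E \<subseteq> Pow V" using EV by blast
  qed (use finV in simp)
  have Tsub: "T \<subseteq> transitions E" using TT unfolding connecting_transition_set_def by blast
  have finT: "finite T"
  proof (rule finite_subset)
    show "T \<subseteq> Pow E"
    proof
      fix t assume "t \<in> T"
      then have "t \<in> transitions E" using Tsub by blast
      then obtain a b c where "t = {{a, b}, {b, c}}" "{a, b} \<in> E" "{b, c} \<in> E" by (rule trans_dec)
      then show "t \<in> Pow E" by simp
    qed
  qed (use finE in simp)
  have Tne: "\<And>t. t \<in> T \<Longrightarrow> t \<noteq> {}"
  proof -
    fix t assume "t \<in> T"
    then have "t \<in> transitions E" using Tsub by blast
    then obtain a b c where "t = {{a, b}, {b, c}}" by (rule trans_dec)
    then show "t \<noteq> {}" by simp
  qed
  define Q where "Q = {(e, f). {e, f} \<in> T}"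
  define R where "R = {(e, f). e \<in> E \<and> f \<in> E \<and> (e, f) \<in> Q\<^sup>*}"
  have Qs: "\<And>e f. (e, f) \<in> Q \<Longrightarrow> e \<in> E \<and> f \<in> E \<and> (\<exists>b c. b \<in> e \<and> f = {b, c})"
    unfolding Q_def using Q_step[OF Tsub] by blast
  have symQ: "sym Q" unfolding Q_def sym_def by (simp add: insert_commute)
  have QE: "\<And>e f. (e, f) \<in> Q\<^sup>* \<Longrightarrow> e \<in> E \<Longrightarrow> f \<in> E"
  proof -
    fix e f assume "(e, f) \<in> Q\<^sup>*" "e \<in> E"
    then show "f \<in> E"
      by (induction rule: rtrancl_induct) (use Qs in auto)
  qed
  have eqR: "equiv E R"
  proof (rule equivI)
    show "R \<subseteq> E \<times> E" unfolding R_def by auto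
    show "refl_on E R" unfolding refl_on_def R_def by auto
    show "sym R"
    proof (rule symI)
      fix e f assume "(e, f) \<in> R"
      then have "e \<in> E" "f \<in> E" "(e, f) \<in> Q\<^sup>*" unfolding R_def by auto
      moreover have "(f, e) \<in> Q\<^sup>*" using sym_rtrancl[OF symQ] \<open>(e, f) \<in> Q\<^sup>*\<close> unfolding sym_def by blast
      ultimately show "(f, e) \<in> R" unfolding R_def by simp
    qed
    show "trans R"
    proof (rule transI)
      fix e f g assume "(e, f) \<in> R" "(f, g) \<in> R"
      then show "(e, g) \<in> R" unfolding R_def by auto
    qed
  qed
  define C where "C = E // R"
  have finC: "finite C" unfolding C_def using finE by (rule finite_quotient) (rule equiv_type[OF eqR])
  have closed: "\<And>K e f. K \<in> C \<Longrightarrow> e \<in> K \<Longrightarrow> (e, f) \<in> Q\<^sup>* \<Longrightarrow> f \<in> K"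
  proof -
    fix K e f assume K: "K \<in> C" and e: "e \<in> K" and ef: "(e, f) \<in> Q\<^sup>*"
    have "K \<subseteq> E" using K eqR unfolding C_def by (meson equiv_type in_quotient_imp_subset)
    then have eE: "e \<in> E" using e by blast
    then have "f \<in> E" using QE ef by blast
    then have "(e, f) \<in> R" using eE ef unfolding R_def by simp
    then show "f \<in> K" using in_quotient_imp_closed[OF eqR K[unfolded C_def] e] by blast
  qed
  have sameR: "\<And>K e f. K \<in> C \<Longrightarrow> e \<in> K \<Longrightarrow> f \<in> K \<Longrightarrow> (e, f) \<in> Q\<^sup>*"
  proof -
    fix K e f assume K: "K \<in> C" and e: "e \<in> K" and f: "f \<in> K"
    have "(e, f) \<in> R" using quotient_eq_iff[OF eqR K[unfolded C_def] K[unfolded C_def] e f] by simp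
    then show "(e, f) \<in> Q\<^sup>*" unfolding R_def by simp
  qed
  have KE: "\<And>K. K \<in> C \<Longrightarrow> K \<subseteq> E"
    using eqR unfolding C_def by (meson equiv_type in_quotient_imp_subset)
  have Kne: "\<And>K. K \<in> C \<Longrightarrow> \<exists>e0. e0 \<in> K"
  proof -
    fix K assume "K \<in> C"
    then obtain e0 where "K = R `` {e0}" "e0 \<in> E" unfolding C_def by (rule quotientE)
    then have "e0 \<in> K" using equiv_class_self[OF eqR] by simp
    then show "\<exists>e0. e0 \<in> K" by blast
  qed
  define TK where "TK K = {t \<in> T. t \<subseteq> K}" for K
  have perK: "card (\<Union>K) - 2 \<le> card (TK K)" if K: "K \<in> C" for K
  proof -
    obtain e0 where e0: "e0 \<in> K" using Kne[OF K] by blast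
    have e0E: "e0 \<in> E" using e0 KE[OF K] by blast
    obtain r r' where rr: "e0 = {r, r'}" using G e0E unfolding simple_graph_def by blast
    have finK: "finite K" using KE[OF K] finE by (meson finite_subset)
    have "\<Union>K \<subseteq> V" using KE[OF K] EV by blast
    then have finUK: "finite (\<Union>K)" using finV by (rule finite_subset)
    define R1 where "R1 = {(x, y). {x, y} \<in> K}"
    have R1W: "R1 \<subseteq> \<Union>K \<times> \<Union>K" unfolding R1_def by blast
    have rW: "r \<in> \<Union>K" using e0 rr by blast
    have conn1: "\<forall>w\<in>\<Union>K. (r, w) \<in> R1\<^sup>*"
    proof
      fix w assume "w \<in> \<Union>K"
      then obtain f where f: "f \<in> K" "w \<in> f" by blast
      have "(e0, f) \<in> Q\<^sup>*" using sameR[OF K e0 f(1)] .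
      then have "f \<in> K \<and> (\<forall>z\<in>f. (r, z) \<in> R1\<^sup>*)"
      proof (induction rule: rtrancl_induct)
        case base
        have "(r, r') \<in> R1" using e0 rr unfolding R1_def by simp
        then show ?case using e0 rr by auto
      next
        case (step g h)
        have hK: "h \<in> K" using closed[OF K step.IH[THEN conjunct1]] step(2) by blast
        obtain b c where bc: "b \<in> g" "h = {b, c}" using Qs[OF step(2)] by blast
        have rb: "(r, b) \<in> R1\<^sup>*" using step.IH bc(1) by blast
        have "(b, c) \<in> R1" using hK bc(2) unfolding R1_def by simp
        then have "(r, c) \<in> R1\<^sup>*" using rb by simp
        then show ?case using hK rb bc(2) by auto
      qed
      then show "(r, w) \<in> R1\<^sup>*" using f(2) by blast
    qed
    have t1: "card (\<Union>K) \<le> card ((\<lambda>(x, y). {x, y}) ` R1) + 1"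
      by (rule tree_bound[OF finUK R1W rW conn1])
    have "(\<lambda>(x, y). {x, y}) ` R1 \<subseteq> K" unfolding R1_def by auto
    then have "card ((\<lambda>(x, y). {x, y}) ` R1) \<le> card K" using finK by (rule card_mono[rotated])
    then have c1: "card (\<Union>K) \<le> card K + 1" using t1 by simp
    define R2 where "R2 = {(e, f). (e, f) \<in> Q \<and> e \<in> K \<and> f \<in> K}"
    have R2W: "R2 \<subseteq> K \<times> K" unfolding R2_def by blast
    have conn2: "\<forall>f\<in>K. (e0, f) \<in> R2\<^sup>*"
    proof
      fix f assume f: "f \<in> K"
      have "(e0, f) \<in> Q\<^sup>*" using sameR[OF K e0 f] .
      then have "f \<in> K \<and> (e0, f) \<in> R2\<^sup>*"
      proof (induction rule: rtrancl_induct)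
        case base then show ?case using e0 by simp
      next
        case (step g h)
        have hK: "h \<in> K" using closed[OF K step.IH[THEN conjunct1]] step(2) by blast
        have gh: "(g, h) \<in> R2" using step hK unfolding R2_def by simp
        have "(e0, h) \<in> R2\<^sup>*" using step.IH[THEN conjunct2] gh by (rule rtrancl_into_rtrancl)
        then show ?case using hK by simp
      qed
      then show "(e0, f) \<in> R2\<^sup>*" by blast
    qed
    have t2: "card K \<le> card ((\<lambda>(x, y). {x, y}) ` R2) + 1"
      by (rule tree_bound[OF finK R2W e0 conn2])
    have "(\<lambda>(x, y). {x, y}) ` R2 \<subseteq> TK K" unfolding R2_def TK_def Q_def by auto
    moreover have "finite (TK K)" unfolding TK_def using finT by simp
    ultimately have "card ((\<lambda>(x, y). {x, y}) ` R2) \<le> card (TK K)" by (rule card_mono[rotated])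
    then have c2: "card K \<le> card (TK K) + 1" using t2 by simp
    show ?thesis using c1 c2 by simp
  qed
  have cnt: "card A + card B - 1 \<le> (\<Sum>K\<in>C. card (\<Union>K) - 2)"
  proof (rule counting[OF finC finV V pA pB AB a0 Bn])
    fix K assume K: "K \<in> C"
    obtain e0 where e0: "e0 \<in> K" using Kne[OF K] by blast
    have e0E: "e0 \<in> E" using e0 KE[OF K] by blast
    obtain s t where st: "e0 = {s, t}" "s \<noteq> t" using G e0E unfolding simple_graph_def by blast
    have sub: "\<Union>K \<subseteq> V" using KE[OF K] EV by blast
    have finUK: "finite (\<Union>K)" using sub finV by (meson finite_subset)
    have "{s, t} \<subseteq> \<Union>K" using e0 st by blast
    then have "card {s, t} \<le> card (\<Union>K)" using finUK by (rule card_mono[rotated])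
    then show "\<Union>K \<subseteq> V \<and> 2 \<le> card (\<Union>K)" using sub st by simp
  next
    fix K assume K: "K \<in> C" and pK: "p \<notin> \<Union>K"
    show "\<Union>K \<inter> A = {} \<or> \<Union>K \<inter> B = {}"
    proof (rule ccontr)
      assume "\<not> (\<Union>K \<inter> A = {} \<or> \<Union>K \<inter> B = {})"
      then obtain a b e f where ab: "e \<in> K" "a \<in> e" "a \<in> A" "f \<in> K" "b \<in> f" "b \<in> B" by blast
      have eE: "e \<in> E" using ab KE[OF K] by blast
      obtain a' where a': "e = {a, a'}" using edge_other[OF G eE ab(2)] by blast
      have "a' \<noteq> p" using pK ab(1) a' by blast
      then have "a' \<in> A" using edge[of a a'] eE a' ab(3) by simp
      then have eA: "e \<subseteq> A" using a' ab(3) by simp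
      have "(e, f) \<in> Q\<^sup>*" using sameR[OF K ab(1) ab(4)] .
      then have "f \<in> K \<and> f \<subseteq> A"
      proof (induction rule: rtrancl_induct)
        case base then show ?case using ab(1) eA by simp
      next
        case (step g h)
        have hK: "h \<in> K" using closed[OF K step.IH[THEN conjunct1]] step(2) by blast
        obtain bb c where bc: "bb \<in> g" "h = {bb, c}" using Qs[OF step(2)] by blast
        have hE: "h \<in> E" using Qs[OF step(2)] by blast
        have bA: "bb \<in> A" using step.IH bc(1) by blast
        have "c \<noteq> p" using pK hK bc(2) by blast
        then have "c \<in> A" using edge[of bb c] hE bc(2) bA by simp
        then show ?case using hK bA bc(2) by simp
      qed
      then show False using ab(5,6) AB by blast
    qed
  next
    fix a b assume a: "a \<in> A" and b: "b \<in> B"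
    have ne: "a \<noteq> b" using a b AB by blast
    have "a \<in> V" "b \<in> V" using a b V by auto
    then obtain xs where xs: "is_walk E xs" "T_compatible T xs" "hd xs = a" "last xs = b"
      using TT unfolding connecting_transition_set_def by blast
    have xne: "xs \<noteq> []" using xs(1) unfolding is_walk_def by simp
    have len: "2 \<le> length xs"
    proof (rule ccontr)
      assume n2: "\<not> 2 \<le> length xs"
      have "length xs \<noteq> 0" using xne by simp
      then have "length xs = Suc 0" using n2 by linarith
      then obtain y ys where "xs = y # ys" "length ys = 0" by (auto simp: length_Suc_conv)
      then have "hd xs = last xs" by simp
      then show False using xs ne by simp
    qed
    define e0 where "e0 = {xs ! 0, xs ! 1}"
    define el where "el = {xs ! (length xs - 2), xs ! Suc (length xs - 2)}"
    have e0E: "e0 \<in> E" using xs(1) len unfolding is_walk_def e0_def by auto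
    have sl: "Suc (length xs - 2) < length xs" using len by simp
    have elE: "el \<in> E" using xs(1) sl unfolding is_walk_def el_def by blast
    have ch: "(e0, el) \<in> Q\<^sup>*" unfolding e0_def el_def
      by (rule walk_chain[OF xs(1) xs(2) Q_def]) (use len in simp)
    define K where "K = R `` {e0}"
    have KC: "K \<in> C" unfolding K_def C_def using e0E by (rule quotientI)
    have e0K: "e0 \<in> K" unfolding K_def using equiv_class_self[OF eqR e0E] .
    have elK: "el \<in> K" using closed[OF KC e0K ch] .
    have "a \<in> e0" using xs(3) xne unfolding e0_def by (simp add: hd_conv_nth)
    moreover have "b \<in> el"
    proof -
      have "Suc (length xs - 2) = length xs - 1" using len by simp
      then have "xs ! Suc (length xs - 2) = last xs" using xne by (simp add: last_conv_nth)
      then show ?thesis using xs(4) unfolding el_def by simp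
    qed
    ultimately show "\<exists>K\<in>C. a \<in> \<Union>K \<and> b \<in> \<Union>K" using KC e0K elK by blast
  qed
  have "(\<Sum>K\<in>C. card (\<Union>K) - 2) \<le> (\<Sum>K\<in>C. card (TK K))" by (rule sum_mono) (rule perK)
  also have "\<dots> = card (\<Union>K\<in>C. TK K)"
  proof (rule card_UN_disjoint[symmetric, OF finC])
    show "\<forall>K\<in>C. finite (TK K)" unfolding TK_def using finT by simp
    show "\<forall>K1\<in>C. \<forall>K2\<in>C. K1 \<noteq> K2 \<longrightarrow> TK K1 \<inter> TK K2 = {}"
    proof (intro ballI impI)
      fix K1 K2 assume K1: "K1 \<in> C" and K2: "K2 \<in> C" and ne: "K1 \<noteq> K2"
      have dj: "K1 \<inter> K2 = {}" using quotient_disj[OF eqR K1[unfolded C_def] K2[unfolded C_def]] ne by blast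
      show "TK K1 \<inter> TK K2 = {}"
      proof (rule ccontr)
        assume "TK K1 \<inter> TK K2 \<noteq> {}"
        then obtain t where t: "t \<in> T" "t \<subseteq> K1" "t \<subseteq> K2" unfolding TK_def by blast
        then show False using Tne[OF t(1)] dj by blast
      qed
    qed
  qed
  also have "\<dots> \<le> card T" by (rule card_mono[OF finT]) (auto simp: TK_def)
  finally have 1: "(\<Sum>K\<in>C. card (\<Union>K) - 2) \<le> card T" .
  have "card V = card A + card B + 1"
  proof -
    have "finite (A \<union> B)" using finV V by simp
    then have "card V = Suc (card (A \<union> B))" using V pA pB by simp
    moreover have "card (A \<union> B) = card A + card B"
      by (rule card_Un_disjoint) (use finV V AB in auto)
    ultimately show ?thesis by simp
  qed
  then show ?thesis using cnt 1 by simp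
qed



theorem lemma5:
  fixes V :: "'a set" and E :: "'a set set"
  assumes "simple_graph V E"
    and "graph_connected V E"
    and "\<exists>p. cut_vertex V E p"
  shows "(\<exists>T. connecting_transition_set V E T \<and> card T = card V - 2)
       \<and> (\<forall>T. connecting_transition_set V E T \<longrightarrow> card V - 2 \<le> card T)
       \<and> connecting_hypergraph V E {V}
       \<and> (\<forall>H. connecting_hypergraph V E H \<longrightarrow> hcost {V} \<le> hcost H)"
proof -
  note G = assms(1) and C = assms(2)
  obtain p where cv: "cut_vertex V E p" using assms(3) by blast
  obtain A B where V: "V = insert p (A \<union> B)" and pA: "p \<notin> A" and pB: "p \<notin> B" and AB: "A \<inter> B = {}"
    and An: "A \<noteq> {}" and Bn: "B \<noteq> {}" and edge: "\<And>x y. {x, y} \<in> E \<Longrightarrow> x \<in> A \<Longrightarrow> y \<noteq> p \<Longrightarrow> y \<in> A"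
    using cut_split[OF G cv] by blast
  have finV: "finite V" using G unfolding simple_graph_def by blast
  obtain a where a: "a \<in> A" using An by blast
  have "{p, a} \<subseteq> V" using V a by blast
  then have "card {p, a} \<le> card V" using finV by (rule card_mono[rotated])
  moreover have "p \<noteq> a" using a pA by blast
  ultimately have c2: "2 \<le> card V" by simp
  have low: "\<forall>T. connecting_transition_set V E T \<longrightarrow> card V - 2 \<le> card T"
    using trans_lower[OF G cv] by blast
  obtain T where T: "connecting_transition_set V E T" "card T + 2 \<le> card V"
    using upper_bound[OF G C c2] by blast
  have "card T = card V - 2" using T low by force
  then have p1: "\<exists>T. connecting_transition_set V E T \<and> card T = card V - 2" using T(1) by blast
  have ind: "induced_edges E V = E" unfolding induced_edges_def using edge_sub[OF G] by blast
  have p3: "connecting_hypergraph V E {V}"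
    unfolding connecting_hypergraph_def using c2 C ind by simp
  have hc: "hcost {V} = card V - 2" unfolding hcost_def by simp
  have p4: "\<forall>H. connecting_hypergraph V E H \<longrightarrow> hcost {V} \<le> hcost H"
    using hyper_lower[OF G cv] hc by simp
  show ?thesis using p1 low p3 p4 by blast
qed

end
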